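(* For all integers $n \geq 1$, $r \geq 1$, and $k \geq 0$, \[\binom{k+r-1}{r-1}\left((k+r)^n - (n+1)(k+r-1)^n\right) \leq E_r(n,k) \leq \binom{k+r-1}{r-1}(k+r)^n.\]
   Context: The $r$th order Eulerian number $E_r(n,k)$ is the number of pairs $(w, S)$ with $w$ a permutation of $\{1, \ldots, n\}$ and $S \subset \{1, \ldots, n-1\}$ of size $r-1$ such that exactly $k$ indices $i \in \{1,\ldots,n-1\} \setminus S$ satisfy $w(i) > w(i+1)$. *)

theory Defs
  imports "HOL-Combinatorics.Combinatorics"
begin

definition descents_outside :: "nat \<Rightarrow> (nat \<Rightarrow> nat) \<Rightarrow> nat set \<Rightarrow> nat set" where
  "descents_outside n w S = {i \<in> {1..n-1} - S. w i > w (i+1)}"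

definition eulerian_r :: "nat \<Rightarrow> nat \<Rightarrow> nat \<Rightarrow> nat" where
  "eulerian_r r n k = card {(w, S). w permutes {1..n} \<and> S \<subseteq> {1..n-1} \<and> card S = r - 1
                                 \<and> card (descents_outside n w S) = k}"

end

theory Submission
  imports Defs
begin



definition key :: "nat \<Rightarrow> (nat \<Rightarrow> nat) \<Rightarrow> nat \<Rightarrow> nat" where
  "key n f u = f u * Suc n + u"

lemma key_inj: "inj_on (key n f) {..n}"
proof (rule inj_onI)
  fix u v assume "u \<in> {..n}" "v \<in> {..n}" "key n f u = key n f v"
  have m: "key n f x mod Suc n = x" if "x \<le> n" for x
    unfolding key_def using mod_mult_self3[of "f x" "Suc n" x] that by simp
  have "u = key n f u mod Suc n" using m[of u] \<open>u \<in> {..n}\<close> by simp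
  also have "\<dots> = key n f v mod Suc n" using \<open>key n f u = key n f v\<close> by (rule arg_cong)
  also have "\<dots> = v" using m[of v] \<open>v \<in> {..n}\<close> by simp
  finally show "u = v" .
qed

lemma key_lt1:
  assumes "a \<le> n" "f a < f b"
  shows "key n f a < key n f b"
proof -
  have h: "(f a + 1) * Suc n \<le> f b * Suc n" by (rule mult_le_mono1) (use assms in simp)
  have e: "(f a + 1) * Suc n = f a * Suc n + Suc n" by (simp only: add_mult_distrib mult_1)
  show ?thesis unfolding key_def using h e assms(1) by linarith
qed

lemma key_less_iff:
  assumes "a \<le> n" "b \<le> n"
  shows "key n f a < key n f b \<longleftrightarrow> f a < f b \<or> (f a = f b \<and> a < b)"
proof -
  consider "f a < f b" | "f a = f b" | "f b < f a" by linarith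
  then show ?thesis
  proof cases
    case 1
    then show ?thesis using key_lt1[OF assms(1) 1] by simp
  next
    case 2 then show ?thesis by (simp add: key_def)
  next
    case 3
    then show ?thesis using key_lt1[OF assms(2) 3] by simp
  qed
qed

definition srt :: "nat \<Rightarrow> (nat \<Rightarrow> nat) \<Rightarrow> nat list" where
  "srt n f = sort_key (key n f) [1..<Suc n]"

definition wsort :: "nat \<Rightarrow> (nat \<Rightarrow> nat) \<Rightarrow> nat \<Rightarrow> nat" where
  "wsort n f i = (if i \<in> {1..n} then srt n f ! (i - 1) else i)"

lemma srt_len[simp]: "length (srt n f) = n" by (simp add: srt_def)
lemma srt_set[simp]: "set (srt n f) = {1..n}" by (auto simp: srt_def)
lemma srt_distinct: "distinct (srt n f)" by (simp add: srt_def)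
lemma srt_sorted: "sorted_wrt (<) (map (key n f) (srt n f))"
proof -
  have "inj_on (key n f) (set (srt n f))" using key_inj[of n f]
    by (rule inj_on_subset) auto
  then have "distinct (map (key n f) (srt n f))" using srt_distinct by (simp add: distinct_map)
  then show ?thesis unfolding strict_sorted_iff by (simp add: srt_def)
qed

lemma wf_in: "i \<in> {1..n} \<Longrightarrow> wsort n f i \<in> {1..n}"
proof -
  assume i: "i \<in> {1..n}"
  then have "srt n f ! (i - 1) \<in> set (srt n f)" by (intro nth_mem) auto
  then show ?thesis using i by (simp add: wsort_def)
qed

lemma wf_mono:
  assumes "i \<in> {1..n}" "j \<in> {1..n}" "i < j"
  shows "key n f (wsort n f i) < key n f (wsort n f j)"
proof -
  have "(map (key n f) (srt n f)) ! (i - 1) < (map (key n f) (srt n f)) ! (j - 1)"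
    using assms by (intro sorted_wrt_nth_less[OF srt_sorted]) auto
  then show ?thesis using assms by (simp add: wsort_def)
qed

lemma wf_permutes: "wsort n f permutes {1..n}"
proof (rule bij_imp_permutes)
  have inj: "inj_on (wsort n f) {1..n}"
  proof (rule inj_onI)
    fix x y assume xy: "x \<in> {1..n}" "y \<in> {1..n}" "wsort n f x = wsort n f y"
    show "x = y"
    proof (rule ccontr)
      assume "x \<noteq> y"
      then consider "x < y" | "y < x" by linarith
      then show False using wf_mono[of x n y f] wf_mono[of y n x f] xy by cases auto
    qed
  qed
  moreover have "wsort n f ` {1..n} \<subseteq> {1..n}" using wf_in by auto
  then have "wsort n f ` {1..n} = {1..n}"
    using endo_inj_surj[OF finite_atLeastAtMost _ inj] by auto
  ultimately show "bij_betw (wsort n f) {1..n} {1..n}" by (simp add: bij_betw_def)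
next
  fix x assume "x \<notin> {1..n}" then show "wsort n f x = x" unfolding wsort_def by auto
qed

lemma wf_unique:
  assumes w: "w permutes {1..n}"
    and mono: "\<And>i. 1 \<le> i \<Longrightarrow> i < n \<Longrightarrow> key n f (w i) < key n f (w (Suc i))"
  shows "wsort n f = w"
proof -
  have strict: "key n f (w i) < key n f (w j)" if "1 \<le> i" "i < j" "j \<le> n" for i j
    using that
  proof (induction j)
    case 0 then show ?case by simp
  next
    case (Suc j)
    show ?case
    proof (cases "i = j")
      case True then show ?thesis using Suc.prems mono by simp
    next
      case False
      then have "key n f (w i) < key n f (w j)" using Suc by simp
      also have "\<dots> < key n f (w (Suc j))" using Suc.prems mono[of j] by simp
      finally show ?thesis .
    qed
  qed
  define ys where "ys = map w [1..<Suc n]"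
  have lys: "length ys = n" by (simp add: ys_def)
  have ysn: "ys ! i = w (Suc i)" if "i < n" for i using that by (simp add: ys_def del: upt_Suc)
  have s1: "sorted_wrt (<) (map (key n f) ys)"
    unfolding sorted_wrt_iff_nth_less by (auto simp: lys ysn intro!: strict)
  have wimg: "w ` {1..n} = {1..n}" using permutes_image[OF w] .
  have "set ys = w ` {1..n}" by (simp add: ys_def atLeastLessThanSuc_atLeastAtMost del: upt_Suc)
  then have sety: "set ys = {1..n}" using wimg by simp
  have "map (key n f) ys = map (key n f) (srt n f)"
    apply (rule sorted_distinct_set_unique)
    using s1 srt_sorted[of n f] unfolding strict_sorted_iff apply auto[4]
    using sety by simp
  moreover have "inj_on (key n f) (set ys \<union> set (srt n f))"
    using sety by (intro inj_on_subset[OF key_inj[of n f]]) auto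
  ultimately have eq: "ys = srt n f" using inj_on_map_eq_map by blast
  show ?thesis
  proof
    fix i show "wsort n f i = w i"
    proof (cases "i \<in> {1..n}")
      case True
      then have "wsort n f i = ys ! (i - 1)" by (simp add: wsort_def eq)
      also have "\<dots> = w i" proof -
        have "i - 1 < n" using True by auto
        then show ?thesis using ysn[of "i - 1"] True by simp
      qed
      finally show ?thesis .
    next
      case False then show ?thesis using permutes_not_in[OF w] unfolding wsort_def by auto
    qed
  qed
qed




definition Xf :: "nat \<Rightarrow> nat \<Rightarrow> (nat \<Rightarrow> nat) set" where
  "Xf n m = {1..n} \<rightarrow>\<^sub>E {0..<m}"
definition JJ :: "nat \<Rightarrow> nat \<Rightarrow> nat set set" where
  "JJ m r = {J. J \<subseteq> {1..m-1} \<and> card J = r - 1}"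
definition Sof :: "nat \<Rightarrow> (nat \<Rightarrow> nat) \<Rightarrow> nat set \<Rightarrow> nat set" where
  "Sof n f J = {i \<in> {1..n-1}. f (wsort n f i) < f (wsort n f (Suc i)) \<and> f (wsort n f (Suc i)) \<in> J}"
definition Psi :: "nat \<Rightarrow> nat set \<times> (nat \<Rightarrow> nat) \<Rightarrow> (nat \<Rightarrow> nat) \<times> nat set" where
  "Psi n = (\<lambda>(J, f). (wsort n f, Sof n f J))"
definition PP :: "nat \<Rightarrow> nat \<Rightarrow> nat \<Rightarrow> ((nat \<Rightarrow> nat) \<times> nat set) set" where
  "PP n r k = {(w, S). w permutes {1..n} \<and> S \<subseteq> {1..n-1} \<and> card S = r - 1
                                 \<and> card (descents_outside n w S) = k}"

lemma eulerian_PP: "eulerian_r r n k = card (PP n r k)"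
  by (simp add: eulerian_r_def PP_def)

lemma upper_surj:
  assumes P: "(w, S) \<in> PP n r k" and r: "r \<ge> 1"
  shows "\<exists>J f. J \<in> JJ (k + r) r \<and> f \<in> Xf n (k + r) \<and> Psi n (J, f) = (w, S)"
proof -
  have w: "w permutes {1..n}" and S: "S \<subseteq> {1..n-1}" "card S = r - 1"
    and dk: "card (descents_outside n w S) = k" using P by (auto simp: PP_def)
  define D where "D = {i \<in> {1..n-1}. w (Suc i) < w i}"
  define C where "C = D \<union> S"
  define blk where "blk i = card {j \<in> C. j < i}" for i
  have finC: "finite C" using S by (auto simp: C_def D_def intro: finite_subset)
  have CS: "C \<subseteq> {1..n-1}" using S by (auto simp: C_def D_def)
  have "descents_outside n w S = D - S" by (auto simp: descents_outside_def D_def)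
  then have "card (D - S) = k" using dk by simp
  moreover have "C = (D - S) \<union> S" by (auto simp: C_def)
  moreover have "finite (D - S)" "finite S" using finC by (auto simp: C_def)
  ultimately have cardC: "card C = k + (r - 1)" using S(2) card_Un_disjoint[of "D - S" S] by auto
  have blk_suc: "blk (Suc i) = blk i + (if i \<in> C then 1 else 0)" for i
  proof -
    have "{j \<in> C. j < Suc i} = (if i \<in> C then insert i {j \<in> C. j < i} else {j \<in> C. j < i})"
      by (auto simp: less_Suc_eq)
    then show ?thesis using finC by (simp add: blk_def)
  qed
  have blk_le: "blk i \<le> card C" for i unfolding blk_def using finC by (intro card_mono) auto
  have blk_mono: "blk i \<le> blk i'" if "i \<le> i'" for i i'
    unfolding blk_def using finC that by (intro card_mono) auto
  define f where "f = restrict (\<lambda>v. blk (inv w v)) {1..n}"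
  have blk_lt: "blk i < k + r" for i using blk_le[of i] cardC r by linarith
  have fX: "f \<in> Xf n (k + r)"
    unfolding Xf_def f_def using blk_lt by auto
  have fw: "f (w i) = blk i" if "i \<in> {1..n}" for i
    using that permutes_in_image[OF w] permutes_inverses(2)[OF w] by (simp add: f_def)
  have mono: "key n f (w i) < key n f (w (Suc i))" if "1 \<le> i" "i < n" for i
  proof (cases "i \<in> C")
    case True
    have "f (w i) < f (w (Suc i))" using that True fw[of i] fw[of "Suc i"] blk_suc[of i] by simp
    moreover have "w i \<le> n" using permutes_in_image[OF w, of i] that by simp
    ultimately show ?thesis by (rule key_lt1[rotated])
  next
    case False
    then have "\<not> w (Suc i) < w i" using that by (auto simp: C_def D_def)
    moreover have "w i \<noteq> w (Suc i)" using injD[OF permutes_inj[OF w], of i "Suc i"] by auto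
    ultimately have lt: "w i < w (Suc i)" by simp
    have eq: "f (w i) = f (w (Suc i))" using that False fw[of i] fw[of "Suc i"] blk_suc[of i] by simp
    have "w i \<in> {1..n}" "w (Suc i) \<in> {1..n}"
      using permutes_in_image[OF w, of i] permutes_in_image[OF w, of "Suc i"] that by simp_all
    then have "w i \<le> n" "w (Suc i) \<le> n" by simp_all
    with key_less_iff[of "w i" n "w (Suc i)" f] lt eq show ?thesis by blast
  qed
  have wfw: "wsort n f = w" by (rule wf_unique[OF w mono])
  define J where "J = (\<lambda>j. blk (Suc j)) ` S"
  have strict: "blk (Suc i) < blk (Suc i')" if "i < i'" "i' \<in> C" for i i'
  proof -
    have "blk (Suc i) \<le> blk i'" using that by (intro blk_mono) simp
    also have "\<dots> < blk (Suc i')" using blk_suc[of i'] that by simp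
    finally show ?thesis .
  qed
  have injC: "inj_on (\<lambda>j. blk (Suc j)) C"
  proof (rule inj_onI)
    fix x y assume "x \<in> C" "y \<in> C" "blk (Suc x) = blk (Suc y)"
    then show "x = y" using strict[of x y] strict[of y x] by (cases x y rule: linorder_cases) auto
  qed
  have SC: "S \<subseteq> C" by (auto simp: C_def)
  have JJ: "J \<in> JJ (k + r) r"
  proof -
    have "J \<subseteq> {1..k + r - 1}"
    proof
      fix c assume "c \<in> J"
      then obtain j where j: "j \<in> S" "c = blk (Suc j)" by (auto simp: J_def)
      then have "c = blk j + 1" using SC blk_suc[of j] by auto
      moreover have "c \<le> card C" using j blk_le by simp
      ultimately show "c \<in> {1..k + r - 1}" using cardC r by simp
    qed
    moreover have "card J = r - 1" unfolding J_def using card_image[OF inj_on_subset[OF injC SC]] S by simp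
    ultimately show ?thesis by (simp add: JJ_def)
  qed
  have "Sof n f J = S"
  proof -
    have "i \<in> S \<longleftrightarrow> (f (w i) < f (w (Suc i)) \<and> f (w (Suc i)) \<in> J)" if i: "i \<in> {1..n-1}" for i
    proof -
      have i1: "i \<in> {1..n}" "Suc i \<in> {1..n}" using i by auto
      have "f (w i) < f (w (Suc i)) \<longleftrightarrow> i \<in> C" using fw[OF i1(1)] fw[OF i1(2)] blk_suc[of i] by simp
      moreover have "blk (Suc i) \<in> J \<longleftrightarrow> i \<in> S" if "i \<in> C"
        unfolding J_def using inj_onD[OF injC] that SC by blast
      ultimately show ?thesis using fw[OF i1(2)] SC by auto
    qed
    then show ?thesis using S unfolding Sof_def wfw by auto
  qed
  then have "Psi n (J, f) = (w, S)" by (simp add: Psi_def wfw)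
  then show ?thesis using JJ fX by blast
qed




definition ev :: "nat \<Rightarrow> (nat \<Rightarrow> nat) \<Rightarrow> nat set \<Rightarrow> nat \<Rightarrow> bool" where
  "ev n f J c = (if c \<in> J then ((\<forall>u\<in>{1..n}. f u \<noteq> c - 1) \<or> (\<forall>u\<in>{1..n}. f u \<noteq> c))
     else (\<forall>u\<in>{1..n}. \<forall>u'\<in>{1..n}. f u = c - 1 \<longrightarrow> f u' = c \<longrightarrow> u < u'))"

lemma notev: "\<not> ev n f J c \<Longrightarrow> (\<exists>u\<in>{1..n}. f u = c - 1) \<and> (\<exists>u\<in>{1..n}. f u = c)"
  unfolding ev_def by (auto split: if_splits)

lemma ev_split: "ev n f J c \<Longrightarrow> u \<in> {1..n} \<Longrightarrow> u' \<in> {1..n} \<Longrightarrow> f u = c - 1 \<Longrightarrow> f u' = c \<Longrightarrow> u < u'"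
  unfolding ev_def by (auto split: if_splits)

lemma good_struct:
  fixes n m :: nat and f :: "nat \<Rightarrow> nat" and J :: "nat set"
  assumes n: "n \<ge> 1" and m: "m \<ge> 1" and fX: "f \<in> Xf n m"
    and good: "\<forall>c\<in>{1..m-1}. \<not> ev n f J c" and J: "J \<subseteq> {1..m-1}"
  defines "w \<equiv> wsort n f"
  defines "S \<equiv> Sof n f J"
  defines "D \<equiv> {i \<in> {1..n-1}. w (Suc i) < w i}"
  shows "\<forall>i\<in>{1..n}. f (w i) = card {j \<in> D \<union> S. j < i}"
    and "(\<lambda>i. f (w (Suc i))) ` S = J"
    and "inj_on (\<lambda>i. f (w (Suc i))) S"
    and "card (D \<union> S) = m - 1"
    and "S \<subseteq> {1..n-1}"
proof -
  have wp: "w permutes {1..n}" unfolding w_def by (rule wf_permutes)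
  have win: "w i \<in> {1..n}" if "i \<in> {1..n}" for i using that unfolding w_def by (rule wf_in)
  define b where "b i = f (w i)" for i
  have b_lt: "b p < m" if "p \<in> {1..n}" for p
    using fX win[OF that] by (auto simp: Xf_def b_def PiE_iff)
  have keylt: "key n f (w i) < key n f (w i')" if "i \<in> {1..n}" "i' \<in> {1..n}" "i < i'" for i i'
    using wf_mono[OF that] unfolding w_def .
  have b_mono: "b i \<le> b i'" if "i \<in> {1..n}" "i' \<in> {1..n}" "i \<le> i'" for i i'
  proof (cases "i = i'")
    case False
    then have "key n f (w i) < key n f (w i')" using keylt that by simp
    then show ?thesis using key_less_iff[of "w i" n "w i'" f] win that by (auto simp: b_def)
  qed simp
  have w_mono: "w i \<le> w i'" if "i \<in> {1..n}" "i' \<in> {1..n}" "i \<le> i'" "b i = b i'" for i i'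
  proof (cases "i = i'")
    case False
    then have "key n f (w i) < key n f (w i')" using keylt that by simp
    then show ?thesis using key_less_iff[of "w i" n "w i'" f] win that by (auto simp: b_def)
  qed simp
  have attain_f: "\<exists>u\<in>{1..n}. f u = c" if "c < m" for c
  proof (cases "c \<ge> 1")
    case True
    then show ?thesis using notev[of n f J c] good that by auto
  next
    case False
    show ?thesis
    proof (cases "m \<ge> 2")
      case True
      have "c = 0" using False by simp
      then show ?thesis using notev[of n f J 1] good True by auto
    next
      case False
      then have "m = 1" using m by simp
      moreover have "f 1 < m" using fX n by (auto simp: Xf_def PiE_iff)
      ultimately show ?thesis using n \<open>\<not> c \<ge> 1\<close> by (intro bexI[of _ 1]) auto
    qed
  qed
  have attain: "\<exists>p\<in>{1..n}. b p = c" if cm: "c < m" for c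
  proof -
    obtain u where u: "u \<in> {1..n}" "f u = c" using attain_f[OF cm] by blast
    have "w (inv w u) = u" using permutes_inverses(1)[OF wp] by simp
    moreover have "inv w u \<in> {1..n}" using permutes_in_image[OF permutes_inv[OF wp]] u by simp
    ultimately show ?thesis using u unfolding b_def by (intro bexI[of _ "inv w u"]) auto
  qed
  have b1: "b 1 = 0"
  proof -
    obtain p where p: "p \<in> {1..n}" "b p = 0" using attain[of 0] m by auto
    have "b 1 \<le> b p" using p n by (intro b_mono) auto
    then show ?thesis using p by simp
  qed
  have bn: "b n = m - 1"
  proof -
    obtain p where p: "p \<in> {1..n}" "b p = m - 1" using attain[of "m - 1"] m by auto
    have "b p \<le> b n" using p n by (intro b_mono) auto
    moreover have "b n < m" using b_lt n by simp
    ultimately show ?thesis using p by simp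
  qed
  have bstep: "b (Suc i) \<le> b i + 1" if "1 \<le> i" "i < n" for i
  proof (rule ccontr)
    assume nt: "\<not> ?thesis"
    then have "b i + 1 < m" using b_lt[of "Suc i"] that by simp
    then obtain p where p: "p \<in> {1..n}" "b p = b i + 1" using attain by blast
    show False
    proof (cases "p \<le> i")
      case True
      then have "b p \<le> b i" using p that by (intro b_mono) auto
      then show False using p by simp
    next
      case False
      then have "b (Suc i) \<le> b p" using p that by (intro b_mono) auto
      then show False using p nt by simp
    qed
  qed
  define Cf where "Cf = {i \<in> {1..n-1}. b i < b (Suc i)}"
  have finCf: "finite Cf" by (simp add: Cf_def)
  have b_count: "b i = card {j \<in> Cf. j < i}" if "i \<in> {1..n}" for i
    using that
  proof (induction i)
    case 0 then show ?case by simp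
  next
    case (Suc i)
    show ?case
    proof (cases "i = 0")
      case True
      then have "{j \<in> Cf. j < Suc i} = {}" by (auto simp: Cf_def)
      then show ?thesis using b1 True by simp
    next
      case False
      then have IH: "b i = card {j \<in> Cf. j < i}" using Suc by simp
      have i: "1 \<le> i" "i < n" using False Suc.prems by auto
      have "{j \<in> Cf. j < Suc i} = (if i \<in> Cf then insert i {j \<in> Cf. j < i} else {j \<in> Cf. j < i})"
        by (auto simp: less_Suc_eq)
      moreover have "b i \<le> b (Suc i)" using i by (intro b_mono) auto
      ultimately show ?thesis using IH bstep[OF i] finCf i by (auto simp: Cf_def)
    qed
  qed
  have cardCf: "card Cf = m - 1"
  proof -
    have "{j \<in> Cf. j < n} = Cf" by (auto simp: Cf_def)
    then show ?thesis using b_count[of n] bn n by simp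
  qed
  have strict: "b (Suc i) < b (Suc i')" if "i < i'" "i' \<in> Cf" for i i'
  proof -
    have "b (Suc i) \<le> b i'" using that by (intro b_mono) (auto simp: Cf_def)
    also have "\<dots> < b (Suc i')" using that by (simp add: Cf_def)
    finally show ?thesis .
  qed
  have injCf: "inj_on (\<lambda>i. b (Suc i)) Cf"
  proof (rule inj_onI)
    fix x y assume "x \<in> Cf" "y \<in> Cf" "b (Suc x) = b (Suc y)"
    then show "x = y" using strict[of x y] strict[of y x] by (cases x y rule: linorder_cases) auto
  qed
  have imgCf: "(\<lambda>i. b (Suc i)) ` Cf = {1..m-1}"
  proof (rule card_subset_eq)
    show "(\<lambda>i. b (Suc i)) ` Cf \<subseteq> {1..m - 1}"
    proof
      fix c assume "c \<in> (\<lambda>i. b (Suc i)) ` Cf"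
      then obtain i where i: "i \<in> Cf" "c = b (Suc i)" by blast
      then have "b (Suc i) < m" using b_lt[of "Suc i"] by (auto simp: Cf_def)
      then show "c \<in> {1..m-1}" using i by (auto simp: Cf_def)
    qed
    show "card ((\<lambda>i. b (Suc i)) ` Cf) = card {1..m - 1}"
      using card_image[OF injCf] cardCf by simp
  qed simp
  have SCf: "S = {i \<in> Cf. b (Suc i) \<in> J}"
    unfolding S_def Sof_def Cf_def b_def w_def by auto
  have DCf: "D \<subseteq> Cf"
  proof
    fix i assume "i \<in> D"
    then have i: "i \<in> {1..n-1}" "w (Suc i) < w i" by (auto simp: D_def)
    have le: "b i \<le> b (Suc i)" using i by (intro b_mono) auto
    have "b i \<noteq> b (Suc i)"
    proof
      assume "b i = b (Suc i)"
      then have "w i \<le> w (Suc i)" using i by (intro w_mono) auto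
      then show False using i by simp
    qed
    then show "i \<in> Cf" using le i by (auto simp: Cf_def)
  qed
  have CfD: "Cf - S \<subseteq> D"
  proof
    fix i assume iC: "i \<in> Cf - S"
    then have i: "1 \<le> i" "i < n" "b i < b (Suc i)" and nJ: "b (Suc i) \<notin> J"
      by (auto simp: Cf_def SCf)
    define c where "c = b (Suc i)"
    have c: "c \<in> {1..m-1}" using imgCf iC unfolding c_def by blast
    have c1: "1 \<le> c" using c by simp
    have bi: "b i = c - 1" using bstep[OF i(1,2)] i(3) unfolding c_def by simp
    have nev: "\<not> ev n f J c" using good c by blast
    then obtain u u' where uu: "u \<in> {1..n}" "u' \<in> {1..n}" "f u = c - 1" "f u' = c" "\<not> u < u'"
      using nJ unfolding ev_def c_def by (auto split: if_splits)
    have "w (inv w u) = u" "w (inv w u') = u'" using permutes_inverses(1)[OF wp] by auto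
    moreover have "inv w u \<in> {1..n}" "inv w u' \<in> {1..n}"
      using permutes_in_image[OF permutes_inv[OF wp]] uu by auto
    ultimately obtain p p' where pp: "p \<in> {1..n}" "p' \<in> {1..n}" "w p = u" "w p' = u'" by metis
    have bp: "b p = c - 1" "b p' = c" using pp uu by (auto simp: b_def)
    have "p \<le> i"
    proof (rule ccontr)
      assume "\<not> p \<le> i"
      then have "b (Suc i) \<le> b p" using pp i by (intro b_mono) auto
      then show False using bp c unfolding c_def by auto
    qed
    then have "w p \<le> w i" using pp i bp bi by (intro w_mono) auto
    have "Suc i \<le> p'"
    proof (rule ccontr)
      assume "\<not> Suc i \<le> p'"
      then have "b p' \<le> b i" using pp i by (intro b_mono) auto
      then show False using bp bi c1 by linarith
    qed
    then have "w (Suc i) \<le> w p'" using pp i bp unfolding c_def by (intro w_mono) auto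
    with \<open>w p \<le> w i\<close> pp uu have "w (Suc i) \<le> w i" by simp
    moreover have "w (Suc i) \<noteq> w i" using injD[OF permutes_inj[OF wp], of "Suc i" i] by auto
    ultimately show "i \<in> D" using i by (auto simp: D_def)
  qed
  have DS: "D \<union> S = Cf" using DCf CfD SCf by auto
  show "\<forall>i\<in>{1..n}. f (w i) = card {j \<in> D \<union> S. j < i}"
    using b_count DS by (simp add: b_def)
  show "card (D \<union> S) = m - 1" using DS cardCf by simp
  show "S \<subseteq> {1..n-1}" using SCf by (auto simp: Cf_def)
  show "inj_on (\<lambda>i. f (w (Suc i))) S"
    using inj_on_subset[OF injCf] SCf by (auto simp: b_def)
  show "(\<lambda>i. f (w (Suc i))) ` S = J"
  proof
    show "(\<lambda>i. f (w (Suc i))) ` S \<subseteq> J" using SCf by (auto simp: b_def)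
    show "J \<subseteq> (\<lambda>i. f (w (Suc i))) ` S"
    proof
      fix c assume "c \<in> J"
      then have "c \<in> (\<lambda>i. b (Suc i)) ` Cf" using J imgCf by auto
      then obtain i where "i \<in> Cf" "c = b (Suc i)" by blast
      then show "c \<in> (\<lambda>i. f (w (Suc i))) ` S" using \<open>c \<in> J\<close> SCf by (auto simp: b_def)
    qed
  qed
qed




lemma bad_lt:
  assumes c1: "1 \<le> c" and cc: "c < c'"
    and nev: "\<not> ev n f' J (c' - 1)"
    and geq: "\<forall>u\<in>{1..n}. (if f u < c then f u else f u - 1) = (if f' u < c' then f' u else f' u - 1)"
    and ceq: "card {u\<in>{1..n}. f u < c} = card {u\<in>{1..n}. f' u < c'}"
  shows False
proof -
  obtain u0 where u0: "u0 \<in> {1..n}" "f' u0 = c' - 1" using notev[OF nev] by blast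
  have sub: "{u\<in>{1..n}. f u < c} \<subseteq> {u\<in>{1..n}. f' u < c' - 1}"
  proof
    fix u assume u: "u \<in> {u\<in>{1..n}. f u < c}"
    then have u1: "u \<in> {1..n}" "f u < c" by auto
    have "(if f' u < c' then f' u else f' u - 1) = f u" using bspec[OF geq u1(1)] u1(2) by simp
    then show "u \<in> {u\<in>{1..n}. f' u < c' - 1}" using u cc by (auto split: if_splits)
  qed
  have "u0 \<in> {u\<in>{1..n}. f' u < c'}" "u0 \<notin> {u\<in>{1..n}. f' u < c' - 1}" using u0 cc by auto
  moreover have "{u\<in>{1..n}. f' u < c' - 1} \<subseteq> {u\<in>{1..n}. f' u < c'}" by auto
  ultimately have "{u\<in>{1..n}. f' u < c' - 1} \<subset> {u\<in>{1..n}. f' u < c'}" by blast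
  then have "card {u\<in>{1..n}. f' u < c' - 1} < card {u\<in>{1..n}. f' u < c'}"
    by (intro psubset_card_mono) auto
  moreover have "card {u\<in>{1..n}. f u < c} \<le> card {u\<in>{1..n}. f' u < c' - 1}"
    using sub by (intro card_mono) auto
  ultimately show False using ceq by simp
qed

lemma bad_eq0:
  assumes c1: "1 \<le> c" and e: "ev n f J c" and e': "ev n f' J c"
    and geq: "\<forall>u\<in>{1..n}. (if f u < c then f u else f u - 1) = (if f' u < c then f' u else f' u - 1)"
    and ceq: "card {u\<in>{1..n}. f u < c} = card {u\<in>{1..n}. f' u < c}"
    and u: "u \<in> {1..n}" "f u = c - 1" "f' u = c"
  shows False
proof -
  define A where "A = {u\<in>{1..n}. f u < c}"
  define A' where "A' = {u\<in>{1..n}. f' u < c}"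
  have "u \<in> A" "u \<notin> A'" using u c1 by (auto simp: A_def A'_def)
  have "\<not> A' \<subseteq> A"
  proof
    assume "A' \<subseteq> A"
    then have "A' = A" using ceq by (intro card_subset_eq) (auto simp: A_def A'_def)
    then show False using \<open>u \<in> A\<close> \<open>u \<notin> A'\<close> by simp
  qed
  then obtain u' where u': "u' \<in> {1..n}" "f' u' < c" "\<not> f u' < c" by (auto simp: A_def A'_def)
  then have "f' u' = f u' - 1" using geq by force
  then have u'2: "f u' = c" "f' u' = c - 1" using u' by auto
  have "u < u'" using ev_split[OF e u(1) u'(1) u(2) u'2(1)] .
  moreover have "u' < u" using ev_split[OF e' u'(1) u(1) u'2(2) u(3)] .
  ultimately show False by simp
qed

lemma bad_eq:
  assumes c1: "1 \<le> c" and e: "ev n f J c" and e': "ev n f' J c"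
    and geq: "\<forall>u\<in>{1..n}. (if f u < c then f u else f u - 1) = (if f' u < c then f' u else f' u - 1)"
    and ceq: "card {u\<in>{1..n}. f u < c} = card {u\<in>{1..n}. f' u < c}"
    and u: "u \<in> {1..n}"
  shows "f u = f' u"
proof (rule ccontr)
  assume ne: "f u \<noteq> f' u"
  have g: "(if f u < c then f u else f u - 1) = (if f' u < c then f' u else f' u - 1)"
    using geq u by blast
  consider "f u = c - 1" "f' u = c" | "f' u = c - 1" "f u = c"
    using g ne c1 by (auto split: if_splits)
  then show False
  proof cases
    case 1 then show False using bad_eq0[OF c1 e e' geq ceq u] by simp
  next
    case 2
    have geq': "\<forall>u\<in>{1..n}. (if f' u < c then f' u else f' u - 1) = (if f u < c then f u else f u - 1)"
      using geq by simp
    show False using bad_eq0[OF c1 e' e geq' ceq[symmetric] u] 2 by simp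
  qed
qed

definition Bad :: "nat \<Rightarrow> nat \<Rightarrow> nat set \<Rightarrow> (nat \<Rightarrow> nat) set" where
  "Bad n m J = {f \<in> Xf n m. \<exists>c\<in>{1..m-1}. ev n f J c}"

lemma bad_bound: "card (Bad n m J) \<le> (n + 1) * (m - 1) ^ n"
proof -
  define c0 where "c0 f = (LEAST c. c \<in> {1..m-1} \<and> ev n f J c)" for f
  define \<beta> where "\<beta> f = (card {u\<in>{1..n}. f u < c0 f},
      restrict (\<lambda>u. if f u < c0 f then f u else f u - 1) {1..n})" for f
  have c0: "c0 f \<in> {1..m-1}" "ev n f J (c0 f)"
    "\<And>c. c \<in> {1..m-1} \<Longrightarrow> c < c0 f \<Longrightarrow> \<not> ev n f J c" if fB: "f \<in> Bad n m J" for f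
  proof -
    obtain c where "c \<in> {1..m-1} \<and> ev n f J c" using fB by (auto simp: Bad_def)
    then have "c0 f \<in> {1..m-1} \<and> ev n f J (c0 f)" unfolding c0_def by (rule LeastI)
    then show "c0 f \<in> {1..m-1}" "ev n f J (c0 f)" by auto
    fix c assume "c \<in> {1..m-1}" "c < c0 f"
    then show "\<not> ev n f J c" unfolding c0_def using not_less_Least by blast
  qed
  have inj: "inj_on \<beta> (Bad n m J)"
  proof (rule inj_onI)
    fix f f' assume f: "f \<in> Bad n m J" and f': "f' \<in> Bad n m J" and eq: "\<beta> f = \<beta> f'"
    have ceq: "card {u\<in>{1..n}. f u < c0 f} = card {u\<in>{1..n}. f' u < c0 f'}"
      using eq by (simp add: \<beta>_def)
    have geq: "\<forall>u\<in>{1..n}. (if f u < c0 f then f u else f u - 1) = (if f' u < c0 f' then f' u else f' u - 1)"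
    proof
      fix u assume u: "u \<in> {1..n}"
      have "restrict (\<lambda>u. if f u < c0 f then f u else f u - 1) {1..n} u
          = restrict (\<lambda>u. if f' u < c0 f' then f' u else f' u - 1) {1..n} u"
        using eq by (simp add: \<beta>_def)
      then show "(if f u < c0 f then f u else f u - 1) = (if f' u < c0 f' then f' u else f' u - 1)"
        using u by simp
    qed
    have c0eq: "c0 f = c0 f'"
    proof (cases "c0 f" "c0 f'" rule: linorder_cases)
      case less
      have "c0 f' - 1 \<in> {1..m-1}" using less c0(1)[OF f] c0(1)[OF f'] by auto
      then have nev: "\<not> ev n f' J (c0 f' - 1)" using c0(3)[OF f'] less by auto
      have c1: "1 \<le> c0 f" using c0(1)[OF f] by simp
      show ?thesis using bad_lt[OF c1 less nev geq ceq] by blast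
    next
      case greater
      have "c0 f - 1 \<in> {1..m-1}" using greater c0(1)[OF f] c0(1)[OF f'] by auto
      then have nev: "\<not> ev n f J (c0 f - 1)" using c0(3)[OF f] greater by auto
      have geq': "\<forall>u\<in>{1..n}. (if f' u < c0 f' then f' u else f' u - 1) = (if f u < c0 f then f u else f u - 1)"
        using geq by simp
      have c1: "1 \<le> c0 f'" using c0(1)[OF f'] by simp
      show ?thesis using bad_lt[OF c1 greater nev geq' ceq[symmetric]] by blast
    qed simp
    have geq2: "\<forall>u\<in>{1..n}. (if f u < c0 f then f u else f u - 1) = (if f' u < c0 f then f' u else f' u - 1)"
      using geq c0eq by simp
    have ceq2: "card {u\<in>{1..n}. f u < c0 f} = card {u\<in>{1..n}. f' u < c0 f}"
      using ceq c0eq by simp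
    have e': "ev n f' J (c0 f)" using c0(2)[OF f'] c0eq by simp
    have c1: "1 \<le> c0 f" using c0(1)[OF f] by simp
    have "\<forall>u\<in>{1..n}. f u = f' u"
      using bad_eq[OF c1 c0(2)[OF f] e' geq2 ceq2] by blast
    moreover have "f \<in> Xf n m" "f' \<in> Xf n m" using f f' by (auto simp: Bad_def)
    ultimately show "f = f'" unfolding Xf_def by (intro PiE_ext) auto
  qed
  have img: "\<beta> ` Bad n m J \<subseteq> {0..n} \<times> ({1..n} \<rightarrow>\<^sub>E {0..<m-1})"
  proof
    fix x assume "x \<in> \<beta> ` Bad n m J"
    then obtain f where f: "f \<in> Bad n m J" and x: "x = \<beta> f" by blast
    have fl: "f u < m" if "u \<in> {1..n}" for u
      using f that by (auto simp: Bad_def Xf_def PiE_iff)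
    have "card {u\<in>{1..n}. f u < c0 f} \<le> n"
    proof -
      have "card {u\<in>{1..n}. f u < c0 f} \<le> card {1..n}" by (rule card_mono) auto
      then show ?thesis by simp
    qed
    moreover have "(if f u < c0 f then f u else f u - 1) < m - 1" if "u \<in> {1..n}" for u
      using fl[OF that] c0(1)[OF f] by auto
    ultimately show "x \<in> {0..n} \<times> ({1..n} \<rightarrow>\<^sub>E {0..<m-1})"
      unfolding x \<beta>_def by auto
  qed
  have "card (Bad n m J) \<le> card ({0..n} \<times> ({1..n} \<rightarrow>\<^sub>E {0..<m-1}))"
    by (rule card_inj_on_le[OF inj img]) (auto intro: finite_PiE)
  also have "\<dots> = (n + 1) * (m - 1) ^ n"
    by (simp add: card_cartesian_product card_PiE)
  finally show ?thesis .
qed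




lemma lower_in:
  assumes n: "n \<ge> 1" and r: "r \<ge> 1" and J: "J \<in> JJ (k + r) r"
    and f: "f \<in> Xf n (k + r) - Bad n (k + r) J"
  shows "Psi n (J, f) \<in> PP n r k"
proof -
  define m where "m = k + r"
  have m: "m \<ge> 1" using r by (simp add: m_def)
  have fX: "f \<in> Xf n m" and good: "\<forall>c\<in>{1..m-1}. \<not> ev n f J c"
    using f by (auto simp: Bad_def m_def)
  have Jsub: "J \<subseteq> {1..m-1}" and cJ: "card J = r - 1" using J by (auto simp: JJ_def m_def)
  define w where "w = wsort n f"
  define S where "S = Sof n f J"
  define D where "D = {i \<in> {1..n-1}. w (Suc i) < w i}"
  note gs = good_struct[OF n m fX good Jsub, folded w_def S_def D_def]
  have wp: "w permutes {1..n}" unfolding w_def by (rule wf_permutes)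
  have finS: "finite S" using gs(5) by (rule finite_subset) simp
  have cS: "card S = r - 1" using card_image[OF gs(3)] gs(2) cJ by simp
  have "descents_outside n w S = (D \<union> S) - S" by (auto simp: descents_outside_def D_def)
  then have "card (descents_outside n w S) = card (D \<union> S) - card S"
    using finS by (simp add: card_Diff_subset)
  also have "\<dots> = k" using gs(4) cS r unfolding D_def m_def by simp
  finally have "card (descents_outside n w S) = k" .
  then show ?thesis using wp gs(5) cS by (simp add: Psi_def PP_def w_def S_def)
qed

lemma lower_inj:
  assumes n: "n \<ge> 1" and r: "r \<ge> 1"
  shows "inj_on (Psi n) (SIGMA J:JJ (k + r) r. Xf n (k + r) - Bad n (k + r) J)"
proof (rule inj_onI)
  define m where "m = k + r"
  have m: "m \<ge> 1" using r by (simp add: m_def)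
  fix x y assume x: "x \<in> (SIGMA J:JJ (k + r) r. Xf n (k + r) - Bad n (k + r) J)"
    and y: "y \<in> (SIGMA J:JJ (k + r) r. Xf n (k + r) - Bad n (k + r) J)" and eq: "Psi n x = Psi n y"
  obtain J f where xJ: "x = (J, f)" by (cases x)
  obtain J' f' where yJ: "y = (J', f')" by (cases y)
  have fX: "f \<in> Xf n m" and good: "\<forall>c\<in>{1..m-1}. \<not> ev n f J c" and Jsub: "J \<subseteq> {1..m-1}"
    using x xJ by (auto simp: Bad_def m_def JJ_def)
  have fX': "f' \<in> Xf n m" and good': "\<forall>c\<in>{1..m-1}. \<not> ev n f' J' c" and Jsub': "J' \<subseteq> {1..m-1}"
    using y yJ by (auto simp: Bad_def m_def JJ_def)
  have ww: "wsort n f' = wsort n f" and SS: "Sof n f' J' = Sof n f J" using eq xJ yJ by (auto simp: Psi_def)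
  define w where "w = wsort n f"
  define S where "S = Sof n f J"
  define D where "D = {i \<in> {1..n-1}. w (Suc i) < w i}"
  note gs = good_struct[OF n m fX good Jsub, folded w_def S_def D_def]
  note gs' = good_struct[OF n m fX' good' Jsub', unfolded ww SS, folded w_def S_def D_def]
  have wp: "w permutes {1..n}" unfolding w_def by (rule wf_permutes)
  have fw: "f (w i) = f' (w i)" if "i \<in> {1..n}" for i using gs(1) gs'(1) that by simp
  have "f u = f' u" if u: "u \<in> {1..n}" for u
  proof -
    have "w (inv w u) = u" using permutes_inverses(1)[OF wp] by simp
    moreover have "inv w u \<in> {1..n}" using permutes_in_image[OF permutes_inv[OF wp]] u by simp
    ultimately show ?thesis using fw[of "inv w u"] by simp
  qed
  then have ff: "f = f'" using fX fX' unfolding Xf_def by (intro PiE_ext) auto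
  have "J = J'" using gs(2) gs'(2) ff by simp
  then show "x = y" using xJ yJ ff by simp
qed

lemma card_Xf: "card (Xf n m) = m ^ n"
  by (simp add: Xf_def card_PiE)

lemma card_JJ: "card (JJ m r) = (m - 1) choose (r - 1)"
  unfolding JJ_def using n_subsets[of "{1..m-1}" "r - 1"] by simp

lemma finite_JJ: "finite (JJ m r)"
  unfolding JJ_def by (rule finite_subset[of _ "Pow {1..m-1}"]) auto

lemma finite_Xf: "finite (Xf n m)"
  unfolding Xf_def by (intro finite_PiE) auto

lemma finite_PP: "finite (PP n r k)"
proof -
  have "PP n r k \<subseteq> {w. w permutes {1..n}} \<times> Pow {1..n-1}" by (auto simp: PP_def)
  moreover have "finite ({w. w permutes {1..n}} \<times> Pow {1..n-1})"
    using finite_permutations[of "{1..n}"] by simp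
  ultimately show ?thesis by (rule finite_subset)
qed

theorem lemma2p7:
  fixes n r k :: nat
  assumes "n \<ge> 1" and "r \<ge> 1"
  shows "int ((k + r - 1) choose (r - 1)) * (int (k + r) ^ n - int (n + 1) * int (k + r - 1) ^ n)
           \<le> int (eulerian_r r n k)
       \<and> eulerian_r r n k \<le> ((k + r - 1) choose (r - 1)) * (k + r) ^ n"
proof
  define m where "m = k + r"
  have upper: "card (PP n r k) \<le> ((k + r - 1) choose (r - 1)) * (k + r) ^ n"
  proof -
    have "PP n r k \<subseteq> Psi n ` (JJ (k + r) r \<times> Xf n (k + r))"
    proof
      fix x assume "x \<in> PP n r k"
      then obtain w S where x: "x = (w, S)" "(w, S) \<in> PP n r k" by (cases x) auto
      then obtain J f where "J \<in> JJ (k + r) r" "f \<in> Xf n (k + r)" "Psi n (J, f) = (w, S)"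
        using upper_surj[OF x(2) assms(2)] by blast
      then show "x \<in> Psi n ` (JJ (k + r) r \<times> Xf n (k + r))" using x by force
    qed
    then have "card (PP n r k) \<le> card (Psi n ` (JJ (k + r) r \<times> Xf n (k + r)))"
      by (intro card_mono finite_imageI) (auto intro: finite_JJ finite_Xf)
    also have "\<dots> \<le> card (JJ (k + r) r \<times> Xf n (k + r))" by (rule card_image_le) (auto intro: finite_JJ finite_Xf)
    also have "\<dots> = ((k + r - 1) choose (r - 1)) * (k + r) ^ n"
      by (simp add: card_cartesian_product card_JJ card_Xf)
    finally show ?thesis .
  qed
  then show "eulerian_r r n k \<le> ((k + r - 1) choose (r - 1)) * (k + r) ^ n"
    by (simp add: eulerian_PP)
  define G where "G = (SIGMA J:JJ (k + r) r. Xf n (k + r) - Bad n (k + r) J)"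
  have "card G \<le> card (PP n r k)"
  proof (rule card_inj_on_le)
    show "inj_on (Psi n) G" using lower_inj[OF assms] unfolding G_def .
    show "finite (PP n r k)" by (rule finite_PP)
    show "Psi n ` G \<subseteq> PP n r k"
      using lower_in[OF assms] unfolding G_def by auto
  qed
  have bsub: "Bad n (k + r) J \<subseteq> Xf n (k + r)" for J by (auto simp: Bad_def)
  have finB: "finite (Bad n (k + r) J)" for J using finite_subset[OF bsub finite_Xf] .
  have "int (card G) = (\<Sum>J\<in>JJ (k + r) r. int (card (Xf n (k + r) - Bad n (k + r) J)))"
    unfolding G_def using finite_JJ finite_Xf by (simp add: card_SigmaI)
  also have "\<dots> = (\<Sum>J\<in>JJ (k + r) r. int ((k + r) ^ n) - int (card (Bad n (k + r) J)))"
  proof (rule sum.cong)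
    fix J
    have "card (Bad n (k + r) J) \<le> card (Xf n (k + r))" by (rule card_mono[OF finite_Xf bsub])
    then show "int (card (Xf n (k + r) - Bad n (k + r) J)) = int ((k + r) ^ n) - int (card (Bad n (k + r) J))"
      using card_Diff_subset[OF finB bsub] card_Xf by simp
  qed simp
  also have "\<dots> \<ge> (\<Sum>J\<in>JJ (k + r) r. int (k + r) ^ n - int (n + 1) * int (k + r - 1) ^ n)"
  proof (rule sum_mono)
    fix J
    have "card (Bad n (k + r) J) \<le> (n + 1) * (k + r - 1) ^ n" by (rule bad_bound)
    then have "int (card (Bad n (k + r) J)) \<le> int (n + 1) * int (k + r - 1) ^ n"
      by (metis of_nat_le_iff of_nat_mult of_nat_power)
    then show "int (k + r) ^ n - int (n + 1) * int (k + r - 1) ^ n \<le> int ((k + r) ^ n) - int (card (Bad n (k + r) J))"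
      by simp
  qed
  finally have "(\<Sum>J\<in>JJ (k + r) r. int (k + r) ^ n - int (n + 1) * int (k + r - 1) ^ n) \<le> int (card G)" .
  moreover have "(\<Sum>J\<in>JJ (k + r) r. int (k + r) ^ n - int (n + 1) * int (k + r - 1) ^ n)
      = int (card (JJ (k + r) r)) * (int (k + r) ^ n - int (n + 1) * int (k + r - 1) ^ n)"
    by (rule sum_constant)
  ultimately have L: "int (card (JJ (k + r) r)) * (int (k + r) ^ n - int (n + 1) * int (k + r - 1) ^ n) \<le> int (card G)"
    by simp
  have "card (JJ (k + r) r) = (k + r - 1) choose (r - 1)" by (rule card_JJ)
  with L have L2: "int ((k + r - 1) choose (r - 1)) * (int (k + r) ^ n - int (n + 1) * int (k + r - 1) ^ n) \<le> int (card G)"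
    by simp
  have "int (card G) \<le> int (eulerian_r r n k)"
    using \<open>card G \<le> card (PP n r k)\<close> by (simp add: eulerian_PP)
  with L2 show "int ((k + r - 1) choose (r - 1)) * (int (k + r) ^ n - int (n + 1) * int (k + r - 1) ^ n)
           \<le> int (eulerian_r r n k)"
    by linarith
qed


end
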